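(* Consider the iterates $\{x(t)\}$ of the asynchronous network Newton method described in the context, with stepsize $\varepsilon$ satisfying $$0<\varepsilon\le 2\left(\frac{\lambda}{\Lambda}\right)^2 .$$ Then, with probability $1$, the sequence $\{F(x(t))\}$ converges to the optimal value $F^*=\min_{x\in\mathbb{R}^n}F(x)$.
   Context: Setup. Let $n\ge 1$ be the number of agents and $\alpha>0$ a scalar. $W\in\mathbb{R}^{n\times n}$ is a symmetric nonnegative matrix with $W\mathbb{1}=\mathbb{1}$ (where $\mathbb{1}$ is the all-ones vector), $\mathrm{null}(I-W)=\mathrm{span}\{\mathbb{1}\}$, $0\le W_{ij}<1$ for all $i,j$, and $\delta\le W_{ii}\le\Delta$ for all $i$, for constants $0<\delta\le\Delta<1$. Each $f_i:\mathbb{R}\to\mathbb{R}$ is twice continuously differentiable with $0<m\le f_i''(s)\le M<\infty$ for all $s$ and $|f_i''(a)-f_i''(b)|\le L|a-b|$ for all $a,b$. Define $F(x)=\frac12 x^T(I-W)x+\alpha\sum_{i=1}^n f_i(x_i)$ for $x\in\mathbb{R}^n$, with minimum value $F^*$ and minimizer $x^*$. Let $g(x)=\nabla F(x)$, $G(x)=\mathrm{diag}(f_1''(x_1),\dots,f_n''(x_n))$, $H(x)=\nabla^2F(x)=I-W+\alpha G(x)$. Let $W_d$ be the diagonal matrix with $[W_d]_{ii}=W_{ii}$, and set $D(x)=\alpha G(x)+2(I-W_d)$ (diagonal, positive definite) and $B=I-2W_d+W$, so $H(x)=D(x)-B$. Define the approximate Hessian inverse $\hat H(x)^{-1}=D(x)^{-1/2}\big(I+D(x)^{-1/2}BD(x)^{-1/2}\big)D(x)^{-1/2}$.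 Constants: $\rho=\frac{2(1-\delta)}{2(1-\delta)+\alpha m}$, $\Lambda=\frac{1+\rho}{2(1-\Delta)+\alpha m}$, $\lambda=\frac{1}{2(1-\delta)+\alpha M}$. Algorithm (asynchronous network Newton). Given $x(0)\in\mathbb{R}^n$ and stepsize $\varepsilon>0$, let $\Phi(1),\Phi(2),\dots$ be i.i.d. random diagonal $n\times n$ matrices, each equal to $e_ie_i^T$ (the matrix with a single $1$ in position $(i,i)$ and zeros elsewhere) with probability $1/n$ for each $i=1,\dots,n$ (i.e., one uniformly random agent is active per iteration). The iterates are $x(t)=x(t-1)-\varepsilon\,\Phi(t)\hat H(x(t-1))^{-1}g(x(t-1))$, $t\ge1$. Write $g(t)=g(x(t))$, $D(t)=D(x(t))$, $H(t)=H(x(t))$, $\hat H(t)^{-1}=\hat H(x(t))^{-1}$. $\mathcal{F}_t$ denotes the $\sigma$-field generated by $\Phi(1),\dots,\Phi(t)$ (so $x(t)$ is $\mathcal{F}_t$-measurable). *)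

theory Defs
  imports "HOL-Probability.Probability"
begin

text \<open>Asynchronous network Newton method. Agents are indexed by a finite type 'n,
  vectors live in real^'n and matrices in real^'n^'n.\<close>

definition onevec :: "real^'n" where
  "onevec = (\<chi> i. 1)"

definition diagm :: "('n \<Rightarrow> real) \<Rightarrow> real^'n^'n" where
  "diagm d = (\<chi> i j. if i = j then d i else 0)"

definition Fobj :: "real^'n^'n \<Rightarrow> real \<Rightarrow> ('n \<Rightarrow> real \<Rightarrow> real) \<Rightarrow> real^'n \<Rightarrow> real" where
  "Fobj W \<alpha> f x = (1/2) * (x \<bullet> ((mat 1 - W) *v x)) + \<alpha> * (\<Sum>i\<in>UNIV. f i (x $ i))"

text \<open>g(x) = grad F(x) = (I - W) x + alpha (f_i'(x_i))_i  (W symmetric); f1 i is f_i'.\<close>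
definition grad :: "real^'n^'n \<Rightarrow> real \<Rightarrow> ('n \<Rightarrow> real \<Rightarrow> real) \<Rightarrow> real^'n \<Rightarrow> real^'n" where
  "grad W \<alpha> f1 x = (mat 1 - W) *v x + \<alpha> *\<^sub>R (\<chi> i. f1 i (x $ i))"

text \<open>G(x) = diag(f_i''(x_i)); f2 i is f_i''.\<close>
definition Gmat :: "('n \<Rightarrow> real \<Rightarrow> real) \<Rightarrow> real^'n \<Rightarrow> real^'n^'n" where
  "Gmat f2 x = diagm (\<lambda>i. f2 i (x $ i))"

definition Wd :: "real^'n^'n \<Rightarrow> real^'n^'n" where
  "Wd W = diagm (\<lambda>i. W $ i $ i)"

definition Dmat :: "real^'n^'n \<Rightarrow> real \<Rightarrow> ('n \<Rightarrow> real \<Rightarrow> real) \<Rightarrow> real^'n \<Rightarrow> real^'n^'n" where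
  "Dmat W \<alpha> f2 x = \<alpha> *\<^sub>R Gmat f2 x + 2 *\<^sub>R (mat 1 - Wd W)"

definition Bmat :: "real^'n^'n \<Rightarrow> real^'n^'n" where
  "Bmat W = mat 1 - 2 *\<^sub>R Wd W + W"

definition Dinvsqrt :: "real^'n^'n \<Rightarrow> real \<Rightarrow> ('n \<Rightarrow> real \<Rightarrow> real) \<Rightarrow> real^'n \<Rightarrow> real^'n^'n" where
  "Dinvsqrt W \<alpha> f2 x = diagm (\<lambda>i. 1 / sqrt (Dmat W \<alpha> f2 x $ i $ i))"

definition Hhat_inv :: "real^'n^'n \<Rightarrow> real \<Rightarrow> ('n \<Rightarrow> real \<Rightarrow> real) \<Rightarrow> real^'n \<Rightarrow> real^'n^'n" where
  "Hhat_inv W \<alpha> f2 x =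
     Dinvsqrt W \<alpha> f2 x ** (mat 1 + Dinvsqrt W \<alpha> f2 x ** Bmat W ** Dinvsqrt W \<alpha> f2 x) ** Dinvsqrt W \<alpha> f2 x"

definition Phi :: "'n \<Rightarrow> real^'n^'n" where
  "Phi i = diagm (\<lambda>j. if j = i then 1 else 0)"

text \<open>Iterates: x(0) = x0, x(t+1) = x(t) - eps Phi(t+1) Hhat(x(t))^{-1} g(x(t)),
  where Phi(t+1) = e_{J t} e_{J t}^T (J t is the agent active at iteration t+1).\<close>
primrec ann_iter :: "real^'n^'n \<Rightarrow> real \<Rightarrow> ('n \<Rightarrow> real \<Rightarrow> real) \<Rightarrow> ('n \<Rightarrow> real \<Rightarrow> real)
    \<Rightarrow> real \<Rightarrow> real^'n \<Rightarrow> (nat \<Rightarrow> 'n) \<Rightarrow> nat \<Rightarrow> real^'n" where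
  "ann_iter W \<alpha> f1 f2 \<epsilon> x0 J 0 = x0"
| "ann_iter W \<alpha> f1 f2 \<epsilon> x0 J (Suc t) =
     ann_iter W \<alpha> f1 f2 \<epsilon> x0 J t
     - \<epsilon> *\<^sub>R ((Phi (J t) ** Hhat_inv W \<alpha> f2 (ann_iter W \<alpha> f1 f2 \<epsilon> x0 J t))
                *v grad W \<alpha> f1 (ann_iter W \<alpha> f1 f2 \<epsilon> x0 J t))"

definition rho_c :: "real \<Rightarrow> real \<Rightarrow> real \<Rightarrow> real" where
  "rho_c \<delta> \<alpha> m = 2 * (1 - \<delta>) / (2 * (1 - \<delta>) + \<alpha> * m)"

definition Lambda_c :: "real \<Rightarrow> real \<Rightarrow> real \<Rightarrow> real \<Rightarrow> real" where
  "Lambda_c \<delta> \<Delta> \<alpha> m = (1 + rho_c \<delta> \<alpha> m) / (2 * (1 - \<Delta>) + \<alpha> * m)"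

definition lambda_c :: "real \<Rightarrow> real \<Rightarrow> real \<Rightarrow> real" where
  "lambda_c \<delta> \<alpha> M = 1 / (2 * (1 - \<delta>) + \<alpha> * M)"

end

theory Submission
  imports Defs
begin


lemma diagm_mult_left: "(diagm a ** M) $ i $ j = a i * M $ i $ j"
proof -
  have "(diagm a ** M) $ i $ j = (\<Sum>k\<in>UNIV. if k = i then a i * M $ k $ j else 0)"
    unfolding matrix_matrix_mult_def diagm_def by (simp only: vec_lambda_beta, rule sum.cong, auto)
  then show ?thesis by simp
qed

lemma diagm_mult_right: "(M ** diagm a) $ i $ j = M $ i $ j * a j"
proof -
  have "(M ** diagm a) $ i $ j = (\<Sum>k\<in>UNIV. if k = j then M $ i $ k * a j else 0)"
    unfolding matrix_matrix_mult_def diagm_def by (simp only: vec_lambda_beta, rule sum.cong, auto)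
  then show ?thesis by simp
qed

definition Dd :: "real^'n^'n \<Rightarrow> real \<Rightarrow> ('n \<Rightarrow> real \<Rightarrow> real) \<Rightarrow> real^'n \<Rightarrow> 'n \<Rightarrow> real" where
  "Dd W \<alpha> f2 x i = \<alpha> * f2 i (x $ i) + 2 * (1 - W $ i $ i)"

lemma Dmat_entry: "Dmat W \<alpha> f2 x $ i $ j = (if i = j then Dd W \<alpha> f2 x i else 0)"
  by (simp add: Dmat_def Dd_def Gmat_def Wd_def diagm_def mat_def)

lemma Bmat_entry: "Bmat W $ i $ j = (if i = j then 1 - 2 * W $ i $ i else 0) + W $ i $ j"
  by (simp add: Bmat_def Wd_def diagm_def mat_def)

lemma Hhat_entry:
  assumes "\<And>i. Dd W \<alpha> f2 x i > 0"
  shows "Hhat_inv W \<alpha> f2 x $ i $ j = (if i = j then 1 / Dd W \<alpha> f2 x i else 0)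
      + Bmat W $ i $ j / (Dd W \<alpha> f2 x i * Dd W \<alpha> f2 x j)"
proof -
  have s: "Dinvsqrt W \<alpha> f2 x = diagm (\<lambda>i. 1 / sqrt (Dd W \<alpha> f2 x i))"
    by (simp add: Dinvsqrt_def Dmat_entry)
  have sq: "\<And>i. (1 / sqrt (Dd W \<alpha> f2 x i)) * (1 / sqrt (Dd W \<alpha> f2 x i)) = 1 / Dd W \<alpha> f2 x i"
    using assms by (simp add: less_imp_le)
  show ?thesis
    unfolding Hhat_inv_def s
    using sq[of i] sq[of j]
    by (simp add: diagm_mult_left diagm_mult_right mat_def algebra_simps)
qed

lemma inner_mv: fixes u v :: "real^'n" and A :: "real^'n^'n" shows "u \<bullet> (A *v v) = (\<Sum>i\<in>UNIV. \<Sum>j\<in>UNIV. u$i * A$i$j * v$j)"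
  by (simp add: inner_vec_def matrix_vector_mult_def sum_distrib_left mult.assoc)

lemma inner_mv_sym:
  fixes u v :: "real^'n" and A :: "real^'n^'n"
  assumes "\<forall>i j. A$i$j = A$j$i"
  shows "u \<bullet> (A *v v) = v \<bullet> (A *v u)"
proof -
  have "u \<bullet> (A *v v) = (\<Sum>i\<in>UNIV. \<Sum>j\<in>UNIV. u$i * A$i$j * v$j)" by (rule inner_mv)
  also have "\<dots> = (\<Sum>j\<in>UNIV. \<Sum>i\<in>UNIV. u$i * A$i$j * v$j)" by (rule sum.swap)
  also have "\<dots> = v \<bullet> (A *v u)" unfolding inner_mv using assms
    by (intro sum.cong refl) (simp add: mult.commute mult.left_commute)
  finally show ?thesis .
qed

lemma quad_A:
  fixes u v :: "real^'n" and A B :: "real^'n^'n" and D :: "'n \<Rightarrow> real"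
  assumes "\<forall>i j. A$i$j = (if i=j then 1/D i else 0) + B$i$j/(D i * D j)"
    and "\<forall>i. D i > 0"
  shows "u \<bullet> (A *v v) = (\<Sum>i\<in>UNIV. u $ i * v $ i / D i) + (\<chi> i. u $ i / D i) \<bullet> (B *v (\<chi> i. v $ i / D i))"
proof -
  have "u \<bullet> (A *v v) = (\<Sum>i\<in>UNIV. \<Sum>j\<in>UNIV. (if i = j then u $ i * v $ i / D i else 0)
        + (u$i/D i) * B$i$j * (v$j/D j))"
    unfolding inner_mv using assms
    by (intro sum.cong refl) (auto simp: field_simps)
  also have "\<dots> = (\<Sum>i\<in>UNIV. u $ i * v $ i / D i) + (\<Sum>i\<in>UNIV. \<Sum>j\<in>UNIV. (u$i/D i) * B$i$j * (v$j/D j))"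
    by (simp add: sum.distrib)
  also have "\<dots> = (\<Sum>i\<in>UNIV. u $ i * v $ i / D i) + (\<chi> i. u $ i / D i) \<bullet> (B *v (\<chi> i. v $ i / D i))"
    unfolding inner_mv by simp
  finally show ?thesis .
qed

lemma B_quad:
  fixes W :: "real^'n^'n" and w :: "real^'n"
  assumes sym: "\<forall>i j. W$i$j = W$j$i" and nn: "\<forall>i j. 0 \<le> W$i$j"
    and row: "\<forall>i. (\<Sum>j\<in>UNIV. W$i$j) = 1"
  shows "0 \<le> w \<bullet> (Bmat W *v w)"
    and "w \<bullet> (Bmat W *v w) \<le> 2 * (\<Sum>i\<in>UNIV. (1 - W$i$i) * (w$i)^2)"
proof -
  define V where "V i j = (if i = j then 0 else W$i$j)" for i j
  have Vnn: "0 \<le> V i j" for i j using nn by (simp add: V_def)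
  have Vrow: "(\<Sum>j\<in>UNIV. V i j) = 1 - W$i$i" for i
  proof -
    have "(\<Sum>j\<in>UNIV. W$i$j) = (\<Sum>j\<in>UNIV. V i j) + (\<Sum>j\<in>UNIV. if j = i then W$i$i else 0)"
      unfolding sum.distrib[symmetric] by (intro sum.cong refl) (auto simp: V_def)
    then show ?thesis using row by simp
  qed
  define S1 where "S1 = (\<Sum>i\<in>UNIV. \<Sum>j\<in>UNIV. V i j * (w$i)^2)"
  define S2 where "S2 = (\<Sum>i\<in>UNIV. \<Sum>j\<in>UNIV. V i j * (w$j)^2)"
  define S3 where "S3 = (\<Sum>i\<in>UNIV. \<Sum>j\<in>UNIV. V i j * (w$i * w$j))"
  have S1: "S1 = (\<Sum>i\<in>UNIV. (1 - W$i$i) * (w$i)^2)"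
    unfolding S1_def sum_distrib_right[symmetric] Vrow ..
  have S2: "S2 = S1"
  proof -
    have "S2 = (\<Sum>j\<in>UNIV. \<Sum>i\<in>UNIV. V i j * (w$j)^2)" unfolding S2_def by (rule sum.swap)
    also have "\<dots> = S1" unfolding S1_def using sym by (intro sum.cong refl) (auto simp: V_def)
    finally show ?thesis .
  qed
  have Q: "w \<bullet> (Bmat W *v w) = S1 + S3"
  proof -
    have "w \<bullet> (Bmat W *v w) = (\<Sum>i\<in>UNIV. \<Sum>j\<in>UNIV.
        (if j = i then (1 - W$i$i) * (w$i)^2 else 0) + V i j * (w$i * w$j))"
      unfolding inner_mv Bmat_entry
      by (intro sum.cong refl) (auto simp: V_def algebra_simps power2_eq_square)
    also have "\<dots> = (\<Sum>i\<in>UNIV. (1 - W$i$i) * (w$i)^2) + S3"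
      unfolding S3_def by (simp add: sum.distrib)
    finally show ?thesis using S1 by simp
  qed
  have P: "0 \<le> (\<Sum>i\<in>UNIV. \<Sum>j\<in>UNIV. V i j * (w$i + w$j)^2)"
    using Vnn by (intro sum_nonneg mult_nonneg_nonneg) auto
  have P2: "(\<Sum>i\<in>UNIV. \<Sum>j\<in>UNIV. V i j * (w$i + w$j)^2) = S1 + S2 + 2 * S3"
    unfolding S1_def S2_def S3_def sum.distrib[symmetric] sum_distrib_left
    by (intro sum.cong refl) (simp add: algebra_simps power2_eq_square)
  have M: "0 \<le> (\<Sum>i\<in>UNIV. \<Sum>j\<in>UNIV. V i j * (w$i - w$j)^2)"
    using Vnn by (intro sum_nonneg mult_nonneg_nonneg) auto
  have M2: "(\<Sum>i\<in>UNIV. \<Sum>j\<in>UNIV. V i j * (w$i - w$j)^2) = S1 + S2 - 2 * S3"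
    unfolding S1_def S2_def S3_def sum_subtractf[symmetric] sum.distrib[symmetric] sum_distrib_left
    by (intro sum.cong refl) (simp add: algebra_simps power2_eq_square)
  show "0 \<le> w \<bullet> (Bmat W *v w)" using P P2 S2 Q by linarith
  show "w \<bullet> (Bmat W *v w) \<le> 2 * (\<Sum>i\<in>UNIV. (1 - W$i$i) * (w$i)^2)"
    using M M2 S2 Q S1 by linarith
qed


lemma ratio_bound:
  fixes t T c m' :: real
  assumes "0 \<le> t" "t \<le> T" "0 < m'" "m' \<le> c"
  shows "t / (t + c) \<le> T / (T + m')"
proof -
  have "t * (T + m') \<le> T * (t + c)"
    using assms mult_mono[of m' c t T] by (simp add: algebra_simps mult.commute)
  then show ?thesis using assms by (simp add: divide_simps)
qed

context
  fixes W :: "real^'n^'n" and \<alpha> \<delta> \<Delta> m M :: real and f2 :: "'n \<Rightarrow> real \<Rightarrow> real"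
  assumes alpha_pos: "\<alpha> > 0"
    and sym: "\<forall>i j. W$i$j = W$j$i" and nn: "\<forall>i j. 0 \<le> W$i$j"
    and row: "\<forall>i. (\<Sum>j\<in>UNIV. W$i$j) = 1"
    and delta_pos: "0 < \<delta>" and delta_le: "\<delta> \<le> \<Delta>" and Delta_lt1: "\<Delta> < 1"
    and W_diag: "\<forall>i. \<delta> \<le> W $ i $ i \<and> W $ i $ i \<le> \<Delta>"
    and m_pos: "0 < m"
    and f2_bounds: "\<forall>i s. m \<le> f2 i s \<and> f2 i s \<le> M"
begin

lemma Dd_lower: "2 * (1 - \<Delta>) + \<alpha> * m \<le> Dd W \<alpha> f2 x i"
proof -
  have "\<alpha> * m \<le> \<alpha> * f2 i (x$i)" using alpha_pos f2_bounds by simp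
  then show ?thesis using W_diag unfolding Dd_def by (smt (verit))
qed

lemma Dd_upper: "Dd W \<alpha> f2 x i \<le> 2 * (1 - \<delta>) + \<alpha> * M"
proof -
  have "\<alpha> * f2 i (x$i) \<le> \<alpha> * M" using alpha_pos f2_bounds by simp
  then show ?thesis using W_diag unfolding Dd_def by (smt (verit))
qed

lemma Dd_pos: "0 < Dd W \<alpha> f2 x i"
  using Dd_lower[of x i] alpha_pos m_pos Delta_lt1 by (smt (verit) mult_pos_pos)

lemma A_entry: "\<forall>i j. Hhat_inv W \<alpha> f2 x $ i $ j = (if i=j then 1/Dd W \<alpha> f2 x i else 0)
      + Bmat W $i$j/(Dd W \<alpha> f2 x i * Dd W \<alpha> f2 x j)"
  using Hhat_entry[of W \<alpha> f2 x] Dd_pos by blast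

lemma A_sym: "\<forall>i j. Hhat_inv W \<alpha> f2 x $ i $ j = Hhat_inv W \<alpha> f2 x $ j $ i"
  using A_entry[of x] sym by (auto simp: Bmat_entry mult.commute)

lemma A_quad: "u \<bullet> (Hhat_inv W \<alpha> f2 x *v u) = (\<Sum>i\<in>UNIV. (u$i)^2 / Dd W \<alpha> f2 x i)
   + (\<chi> i. u $ i / Dd W \<alpha> f2 x i) \<bullet> (Bmat W *v (\<chi> i. u $ i / Dd W \<alpha> f2 x i))"
  using quad_A[OF A_entry[of x], of u u] Dd_pos by (simp add: power2_eq_square)

lemma A_psd: "0 \<le> u \<bullet> (Hhat_inv W \<alpha> f2 x *v u)"
  unfolding A_quad
  using B_quad(1)[OF sym nn row] Dd_pos
  by (intro add_nonneg_nonneg sum_nonneg) (auto intro: divide_nonneg_pos)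

lemma A_lower: "lambda_c \<delta> \<alpha> M * (u \<bullet> u) \<le> u \<bullet> (Hhat_inv W \<alpha> f2 x *v u)"
proof -
  have "lambda_c \<delta> \<alpha> M * (u \<bullet> u) = (\<Sum>i\<in>UNIV. lambda_c \<delta> \<alpha> M * (u$i)^2)"
    by (simp add: inner_vec_def sum_distrib_left power2_eq_square)
  also have "\<dots> \<le> (\<Sum>i\<in>UNIV. (u$i)^2 / Dd W \<alpha> f2 x i)"
  proof (rule sum_mono)
    fix i
    have "lambda_c \<delta> \<alpha> M \<le> 1 / Dd W \<alpha> f2 x i"
      unfolding lambda_c_def using Dd_pos[of x i] Dd_upper[of x i]
      by (simp add: frac_le)
    then show "lambda_c \<delta> \<alpha> M * (u$i)^2 \<le> (u$i)^2 / Dd W \<alpha> f2 x i"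
      by (metis divide_inverse_commute inverse_eq_divide mult.commute mult_right_mono zero_le_power2)
  qed
  also have "\<dots> \<le> u \<bullet> (Hhat_inv W \<alpha> f2 x *v u)"
    unfolding A_quad using B_quad(1)[OF sym nn row] by simp
  finally show ?thesis .
qed

lemma A_upper: "u \<bullet> (Hhat_inv W \<alpha> f2 x *v u) \<le> Lambda_c \<delta> \<Delta> \<alpha> m * (u \<bullet> u)"
proof -
  let ?D = "Dd W \<alpha> f2 x"
  have "u \<bullet> (Hhat_inv W \<alpha> f2 x *v u) \<le> (\<Sum>i\<in>UNIV. (u$i)^2 / ?D i)
     + 2 * (\<Sum>i\<in>UNIV. (1 - W$i$i) * ((\<chi> i. u $ i / ?D i) $ i)^2)"
    unfolding A_quad by (rule add_left_mono, rule B_quad(2)[OF sym nn row])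
  also have "\<dots> = (\<Sum>i\<in>UNIV. (u$i)^2 / ?D i * (1 + 2 * (1 - W$i$i) / ?D i))"
    by (simp add: sum_distrib_left sum.distrib[symmetric] algebra_simps power2_eq_square)
  also have "\<dots> \<le> (\<Sum>i\<in>UNIV. Lambda_c \<delta> \<Delta> \<alpha> m * (u$i)^2)"
  proof (rule sum_mono)
    fix i
    have D0: "0 < ?D i" by (rule Dd_pos)
    have r: "2 * (1 - W$i$i) / ?D i \<le> rho_c \<delta> \<alpha> m"
    proof -
      have "2 * (1 - W$i$i) / ?D i = 2 * (1 - W$i$i) / (2 * (1 - W$i$i) + \<alpha> * f2 i (x$i))"
        by (simp add: Dd_def)
      also have "\<dots> \<le> 2 * (1 - \<delta>) / (2 * (1 - \<delta>) + \<alpha> * m)"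
        using W_diag delta_le Delta_lt1 alpha_pos m_pos f2_bounds
        by (intro ratio_bound) (auto intro: mult_pos_pos less_imp_le order_trans[OF _ less_imp_le[OF Delta_lt1]])
      finally show ?thesis by (simp add: rho_c_def)
    qed
    have rho0: "0 \<le> rho_c \<delta> \<alpha> m"
      unfolding rho_c_def using delta_le Delta_lt1 alpha_pos m_pos
      by (intro divide_nonneg_pos) (auto intro: add_pos_pos mult_pos_pos)
    have a: "1 / ?D i \<le> 1 / (2 * (1 - \<Delta>) + \<alpha> * m)"
      using Dd_lower[of x i] alpha_pos m_pos Delta_lt1
      by (intro frac_le) (auto intro: add_pos_pos mult_pos_pos)
    have p: "0 \<le> 1 + 2 * (1 - W$i$i) / ?D i" using W_diag Delta_lt1 D0
      by (smt (verit) divide_nonneg_pos)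
    have "1 / ?D i * (1 + 2 * (1 - W$i$i) / ?D i) \<le> 1 / (2 * (1 - \<Delta>) + \<alpha> * m) * (1 + rho_c \<delta> \<alpha> m)"
      using a r p D0 Delta_lt1 alpha_pos m_pos by (intro mult_mono) (auto intro!: add_nonneg_nonneg)
    also have "\<dots> = Lambda_c \<delta> \<Delta> \<alpha> m" by (simp add: Lambda_c_def)
    finally have "1 / ?D i * (1 + 2 * (1 - W$i$i) / ?D i) \<le> Lambda_c \<delta> \<Delta> \<alpha> m" .
    then have "(u$i)^2 * (1 / ?D i * (1 + 2 * (1 - W$i$i) / ?D i)) \<le> (u$i)^2 * Lambda_c \<delta> \<Delta> \<alpha> m"
      by (intro mult_left_mono) auto
    moreover have "(u$i)^2 / ?D i * (1 + 2 * (1 - W$i$i) / ?D i) = (u$i)^2 * (1 / ?D i * (1 + 2 * (1 - W$i$i) / ?D i))"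
      by simp
    ultimately show "(u$i)^2 / ?D i * (1 + 2 * (1 - W$i$i) / ?D i) \<le> Lambda_c \<delta> \<Delta> \<alpha> m * (u$i)^2"
      by (simp add: mult.commute)
  qed
  also have "\<dots> = Lambda_c \<delta> \<Delta> \<alpha> m * (u \<bullet> u)"
    by (simp add: inner_vec_def sum_distrib_left power2_eq_square)
  finally show ?thesis .
qed

end


lemma taylor2:
  fixes f f1 f2 :: "real \<Rightarrow> real"
  assumes d1: "\<forall>s. (f has_real_derivative f1 s) (at s)"
    and d2: "\<forall>s. (f1 has_real_derivative f2 s) (at s)"
  shows "\<exists>t. f b = f a + f1 a * (b - a) + f2 t / 2 * (b - a)^2"
proof (cases "b = a")
  case True then show ?thesis by simp
next
  case False
  define diff where "diff m = (if m = 0 then f else if m = 1 then f1 else f2)" for m :: nat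
  have "\<exists>t. (if b < a then b < t \<and> t < a else a < t \<and> t < b) \<and>
    f b = (\<Sum>m<2. (diff m a / fact m) * (b - a)^m) + (diff 2 t / fact 2) * (b - a)^2"
  proof (rule Taylor[of 2 diff f "min a b" "max a b"])
    show "\<forall>m t. m < 2 \<and> min a b \<le> t \<and> t \<le> max a b \<longrightarrow> DERIV (diff m) t :> diff (Suc m) t"
      using d1 d2 by (auto simp: diff_def less_2_cases_iff)
  qed (use False in \<open>auto simp: diff_def\<close>)
  then obtain t where "f b = (\<Sum>m<2. (diff m a / fact m) * (b - a)^m) + (diff 2 t / fact 2) * (b - a)^2"
    by blast
  then have "f b = f a + f1 a * (b - a) + f2 t / 2 * (b - a)^2"
    by (simp add: diff_def numeral_2_eq_2 lessThan_Suc)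
  then show ?thesis by blast
qed

lemma cs_A:
  fixes A :: "real^'n^'n" and g :: "real^'n" and Lam :: real
  assumes psd: "\<forall>u. 0 \<le> u \<bullet> (A *v u)" and up: "\<forall>u. u \<bullet> (A *v u) \<le> Lam * (u \<bullet> u)"
    and symA: "\<forall>i j. A$i$j = A$j$i" and Lpos: "0 < Lam"
  shows "(A *v g) \<bullet> (A *v g) \<le> Lam * (g \<bullet> (A *v g))"
proof -
  define d where "d = A *v g"
  define c where "c = 1 / Lam"
  have e1: "g \<bullet> (A *v d) = d \<bullet> d"
    using inner_mv_sym[OF symA, of g d] by (simp add: d_def)
  have "0 \<le> (g - c *\<^sub>R d) \<bullet> (A *v (g - c *\<^sub>R d))" using psd by blast
  also have "\<dots> = g \<bullet> d - 2 * c * (d \<bullet> d) + c^2 * (d \<bullet> (A *v d))"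
    using e1 by (simp add: d_def matrix_vector_mult_diff_distrib matrix_vector_mult_scaleR
        inner_diff_left inner_diff_right inner_commute power2_eq_square algebra_simps)
  also have "\<dots> \<le> g \<bullet> d - 2 * c * (d \<bullet> d) + c^2 * (Lam * (d \<bullet> d))"
    using up by (intro add_left_mono mult_left_mono) auto
  also have "\<dots> = g \<bullet> d - (d \<bullet> d) / Lam"
    using Lpos by (simp add: c_def power2_eq_square field_simps)
  finally have "(d \<bullet> d) / Lam \<le> g \<bullet> d" by simp
  then show ?thesis using Lpos by (simp add: d_def field_simps inner_commute)
qed

lemma coord_update:
  fixes W :: "real^'n^'n" and x :: "real^'n"
  assumes sym: "\<forall>i j. W$i$j = W$j$i"
  shows "Fobj W \<alpha> f (x + \<tau> *\<^sub>R axis i 1) = Fobj W \<alpha> f x + \<tau> * ((mat 1 - W) *v x) $ i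
     + \<tau>^2 / 2 * (1 - W$i$i) + \<alpha> * (f i (x$i + \<tau>) - f i (x$i))"
proof -
  define Q where "Q = mat 1 - W"
  have symQ: "\<forall>i j. Q$i$j = Q$j$i" using sym by (simp add: Q_def mat_def)
  define e where "e = axis i (1::real)"
  have eQx: "e \<bullet> (Q *v x) = (Q *v x) $ i" by (simp add: e_def inner_axis')
  have xQe: "x \<bullet> (Q *v e) = (Q *v x) $ i" using inner_mv_sym[OF symQ, of x e] eQx by simp
  have eQe: "e \<bullet> (Q *v e) = 1 - W$i$i"
  proof -
    have "e \<bullet> (Q *v e) = (Q *v e) $ i" by (simp add: e_def inner_axis')
    also have "\<dots> = (\<Sum>j\<in>UNIV. if j = i then Q$i$j else 0)"
      unfolding matrix_vector_mult_def e_def axis_def by (simp only: vec_lambda_beta, rule sum.cong, auto)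
    also have "\<dots> = 1 - W$i$i" by (simp add: Q_def mat_def)
    finally show ?thesis .
  qed
  have quad: "(x + \<tau> *\<^sub>R e) \<bullet> (Q *v (x + \<tau> *\<^sub>R e)) = x \<bullet> (Q *v x) + 2 * \<tau> * (Q *v x) $ i + \<tau>^2 * (1 - W$i$i)"
  proof -
    have "(x + \<tau> *\<^sub>R e) \<bullet> (Q *v (x + \<tau> *\<^sub>R e)) = x \<bullet> (Q *v x) + \<tau> * (x \<bullet> (Q *v e)) + \<tau> * (e \<bullet> (Q *v x)) + \<tau>^2 * (e \<bullet> (Q *v e))"
      by (simp add: matrix_vector_right_distrib matrix_vector_mult_scaleR inner_add_left inner_add_right
        power2_eq_square algebra_simps)
    then show ?thesis unfolding eQx xQe eQe by simp
  qed
  have sums: "(\<Sum>k\<in>UNIV. f k ((x + \<tau> *\<^sub>R e) $ k)) = (\<Sum>k\<in>UNIV. f k (x $ k)) + (f i (x$i + \<tau>) - f i (x$i))"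
  proof -
    have "(\<Sum>k\<in>UNIV. f k ((x + \<tau> *\<^sub>R e) $ k)) = (\<Sum>k\<in>UNIV. f k (x $ k) + (if k = i then f i (x$i + \<tau>) - f i (x$i) else 0))"
      by (rule sum.cong) (auto simp: e_def axis_def)
    then show ?thesis by (simp add: sum.distrib)
  qed
  show ?thesis
    unfolding Fobj_def Q_def[symmetric] e_def[symmetric] quad sums by (simp add: field_simps)
qed


lemma Q_psd:
  fixes W :: "real^'n^'n" and h :: "real^'n"
  assumes sym: "\<forall>i j. W$i$j = W$j$i" and nn: "\<forall>i j. 0 \<le> W$i$j"
    and row: "\<forall>i. (\<Sum>j\<in>UNIV. W$i$j) = 1"
  shows "0 \<le> h \<bullet> ((mat 1 - W) *v h)"
proof -
  define S1 where "S1 = (\<Sum>i\<in>UNIV. \<Sum>j\<in>UNIV. W$i$j * (h$i)^2)"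
  define S2 where "S2 = (\<Sum>i\<in>UNIV. \<Sum>j\<in>UNIV. W$i$j * (h$j)^2)"
  define S3 where "S3 = (\<Sum>i\<in>UNIV. \<Sum>j\<in>UNIV. W$i$j * (h$i * h$j))"
  have S1: "S1 = h \<bullet> h"
    unfolding S1_def sum_distrib_right[symmetric] using row by (simp add: inner_vec_def power2_eq_square)
  have S2: "S2 = S1"
  proof -
    have "S2 = (\<Sum>j\<in>UNIV. \<Sum>i\<in>UNIV. W$i$j * (h$j)^2)" unfolding S2_def by (rule sum.swap)
    also have "\<dots> = S1" unfolding S1_def using sym by (intro sum.cong refl) auto
    finally show ?thesis .
  qed
  have Q: "h \<bullet> ((mat 1 - W) *v h) = h \<bullet> h - S3"
  proof -
    have "(mat 1 - W) *v h = h - W *v h" by (simp add: matrix_vector_mult_diff_rdistrib)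
    moreover have "h \<bullet> (W *v h) = S3" unfolding S3_def inner_mv
      by (intro sum.cong refl) (simp add: algebra_simps)
    ultimately show ?thesis by (simp add: inner_diff_right)
  qed
  have M: "0 \<le> (\<Sum>i\<in>UNIV. \<Sum>j\<in>UNIV. W$i$j * (h$i - h$j)^2)"
    using nn by (intro sum_nonneg mult_nonneg_nonneg) auto
  have M2: "(\<Sum>i\<in>UNIV. \<Sum>j\<in>UNIV. W$i$j * (h$i - h$j)^2) = S1 + S2 - 2 * S3"
    unfolding S1_def S2_def S3_def sum_subtractf[symmetric] sum.distrib[symmetric] sum_distrib_left
    by (intro sum.cong refl) (simp add: algebra_simps power2_eq_square)
  show ?thesis using M M2 S1 S2 Q by linarith
qed


lemma strong_conv:
  fixes W :: "real^'n^'n" and x y :: "real^'n" and f f1 f2 :: "'n \<Rightarrow> real \<Rightarrow> real"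
  assumes sym: "\<forall>i j. W$i$j = W$j$i" and nn: "\<forall>i j. 0 \<le> W$i$j"
    and row: "\<forall>i. (\<Sum>j\<in>UNIV. W$i$j) = 1"
    and alpha_pos: "\<alpha> > 0"
    and f_deriv: "\<forall>i s. (f i has_real_derivative f1 i s) (at s)"
    and f1_deriv: "\<forall>i s. (f1 i has_real_derivative f2 i s) (at s)"
    and f2_low: "\<forall>i s. m \<le> f2 i s"
  shows "Fobj W \<alpha> f x + grad W \<alpha> f1 x \<bullet> (y - x) + (\<alpha> * m / 2) * ((y - x) \<bullet> (y - x)) \<le> Fobj W \<alpha> f y"
proof -
  define Q where "Q = mat 1 - W"
  have symQ: "\<forall>i j. Q$i$j = Q$j$i" using sym by (simp add: Q_def mat_def)
  define h where "h = y - x"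
  have y: "y = x + h" by (simp add: h_def)
  have quad: "y \<bullet> (Q *v y) = x \<bullet> (Q *v x) + 2 * ((Q *v x) \<bullet> h) + h \<bullet> (Q *v h)"
  proof -
    have "y \<bullet> (Q *v y) = x \<bullet> (Q *v x) + x \<bullet> (Q *v h) + h \<bullet> (Q *v x) + h \<bullet> (Q *v h)"
      unfolding y by (simp add: matrix_vector_right_distrib inner_add_left inner_add_right)
    moreover have "x \<bullet> (Q *v h) = h \<bullet> (Q *v x)" by (rule inner_mv_sym[OF symQ])
    ultimately show ?thesis by (simp add: inner_commute)
  qed
  have hQh: "0 \<le> h \<bullet> (Q *v h)" unfolding Q_def by (rule Q_psd[OF sym nn row])
  have tk: "f k (x$k) + f1 k (x$k) * h$k + m / 2 * (h$k)^2 \<le> f k (y$k)" for k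
  proof -
    obtain t where t: "f k (y$k) = f k (x$k) + f1 k (x$k) * (y$k - x$k) + f2 k t / 2 * (y$k - x$k)^2"
      using taylor2[of "f k" "f1 k" "f2 k" "y$k" "x$k"] f_deriv f1_deriv by blast
    have "m / 2 * (h$k)^2 \<le> f2 k t / 2 * (h$k)^2"
      using f2_low by (intro mult_right_mono divide_right_mono) auto
    then show ?thesis using t by (simp add: h_def)
  qed
  have sums: "(\<Sum>k\<in>UNIV. f k (x$k)) + (\<Sum>k\<in>UNIV. f1 k (x$k) * h$k) + m / 2 * (h \<bullet> h) \<le> (\<Sum>k\<in>UNIV. f k (y$k))"
  proof -
    have "(\<Sum>k\<in>UNIV. f k (x$k)) + (\<Sum>k\<in>UNIV. f1 k (x$k) * h$k) + m / 2 * (h \<bullet> h)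
        = (\<Sum>k\<in>UNIV. f k (x$k) + f1 k (x$k) * h$k + m / 2 * (h$k)^2)"
      by (simp add: sum.distrib inner_vec_def sum_distrib_left power2_eq_square)
    also have "\<dots> \<le> (\<Sum>k\<in>UNIV. f k (y$k))" by (rule sum_mono) (rule tk)
    finally show ?thesis .
  qed
  have g: "grad W \<alpha> f1 x \<bullet> h = (Q *v x) \<bullet> h + \<alpha> * (\<Sum>k\<in>UNIV. f1 k (x$k) * h$k)"
    by (simp add: grad_def Q_def inner_add_left inner_vec_def sum_distrib_left sum.distrib[symmetric] algebra_simps)
  have "Fobj W \<alpha> f x + grad W \<alpha> f1 x \<bullet> h + (\<alpha> * m / 2) * (h \<bullet> h)
      = 1/2 * (x \<bullet> (Q *v x)) + (Q *v x) \<bullet> h + \<alpha> * ((\<Sum>k\<in>UNIV. f k (x$k)) + (\<Sum>k\<in>UNIV. f1 k (x$k) * h$k) + m / 2 * (h \<bullet> h))"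
    unfolding g Fobj_def Q_def by (simp add: algebra_simps)
  also have "\<dots> \<le> 1/2 * (x \<bullet> (Q *v x)) + (Q *v x) \<bullet> h + 1/2 * (h \<bullet> (Q *v h)) + \<alpha> * (\<Sum>k\<in>UNIV. f k (y$k))"
    using mult_left_mono[OF sums less_imp_le[OF alpha_pos]] hQh by linarith
  also have "\<dots> = Fobj W \<alpha> f y"
    unfolding Fobj_def Q_def[symmetric] quad by (simp add: algebra_simps)
  finally show ?thesis by (simp add: h_def)
qed

lemma quad_min:
  fixes g h :: "real^'n" and \<mu> :: real
  assumes "\<mu> > 0"
  shows "- (g \<bullet> g) / (2 * \<mu>) \<le> g \<bullet> h + \<mu> / 2 * (h \<bullet> h)"
proof -
  have "0 \<le> (g + \<mu> *\<^sub>R h) \<bullet> (g + \<mu> *\<^sub>R h)" by simp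
  also have "\<dots> = g \<bullet> g + 2 * \<mu> * (g \<bullet> h) + \<mu>^2 * (h \<bullet> h)"
    by (simp add: inner_add_left inner_add_right inner_commute power2_eq_square algebra_simps)
  finally have "0 \<le> g \<bullet> g + 2 * \<mu> * (g \<bullet> h) + \<mu>^2 * (h \<bullet> h)" .
  then have "0 \<le> (g \<bullet> g + 2 * \<mu> * (g \<bullet> h) + \<mu>^2 * (h \<bullet> h)) / (2 * \<mu>)" using assms by simp
  also have "\<dots> = (g \<bullet> g) / (2 * \<mu>) + (g \<bullet> h + \<mu> / 2 * (h \<bullet> h))"
    using assms by (simp add: field_simps power2_eq_square)
  finally show ?thesis by simp
qed


lemma Phi_mv: "(Phi i ** A) *v g = (A *v g) $ i *\<^sub>R axis i (1::real)"
proof -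
  have "(Phi i ** A) *v g = Phi i *v (A *v g)" by (simp add: matrix_vector_mul_assoc)
  also have "\<dots> = (A *v g) $ i *\<^sub>R axis i 1"
  proof (subst vec_eq_iff, intro allI)
    fix k
    have "(Phi i *v (A *v g)) $ k = (\<Sum>j\<in>UNIV. if j = k \<and> k = i then (A *v g) $ j else 0)"
      unfolding matrix_vector_mult_def Phi_def diagm_def by (simp only: vec_lambda_beta, rule sum.cong, auto)
    then show "(Phi i *v (A *v g)) $ k = ((A *v g) $ i *\<^sub>R axis i 1) $ k"
      by (auto simp: axis_def)
  qed
  finally show ?thesis .
qed

locale annctx =
  fixes W :: "real^'n^'n" and \<alpha> \<delta> \<Delta> m M \<epsilon> :: real and f f1 f2 :: "'n \<Rightarrow> real \<Rightarrow> real"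
  assumes alpha_pos: "\<alpha> > 0"
    and sym: "\<forall>i j. W$i$j = W$j$i" and nn: "\<forall>i j. 0 \<le> W$i$j"
    and row: "\<forall>i. (\<Sum>j\<in>UNIV. W$i$j) = 1"
    and delta_pos: "0 < \<delta>" and delta_le: "\<delta> \<le> \<Delta>" and Delta_lt1: "\<Delta> < 1"
    and W_diag: "\<forall>i. \<delta> \<le> W $ i $ i \<and> W $ i $ i \<le> \<Delta>"
    and f_deriv: "\<forall>i s. (f i has_real_derivative f1 i s) (at s)"
    and f1_deriv: "\<forall>i s. (f1 i has_real_derivative f2 i s) (at s)"
    and m_pos: "0 < m"
    and f2_bounds: "\<forall>i s. m \<le> f2 i s \<and> f2 i s \<le> M"
    and eps_pos: "0 < \<epsilon>"
    and eps_le: "\<epsilon> \<le> 2 * (lambda_c \<delta> \<alpha> M / Lambda_c \<delta> \<Delta> \<alpha> m)\<^sup>2"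
begin

definition "Fs = (INF z. Fobj W \<alpha> f z)"
definition "stp x i = x - \<epsilon> *\<^sub>R ((Phi i ** Hhat_inv W \<alpha> f2 x) *v grad W \<alpha> f1 x)"
definition "lam = lambda_c \<delta> \<alpha> M"
definition "Lam = Lambda_c \<delta> \<Delta> \<alpha> m"
definition "H = 1 - \<delta> + \<alpha> * M"
definition "cc = 1 - \<epsilon> * H * Lam / 2"
definition "kap = 2 * \<epsilon> * cc * lam * (\<alpha> * m)"

lemma mM: "m \<le> M" using f2_bounds by (meson order_trans)

lemma lam_pos: "0 < lam"
  unfolding lam_def lambda_c_def using delta_le Delta_lt1 alpha_pos m_pos mM
  by (smt (verit) divide_pos_pos mult_pos_pos)

lemma den_pos: "0 < 2 * (1 - \<Delta>) + \<alpha> * m"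
  using Delta_lt1 alpha_pos m_pos by (smt (verit) mult_pos_pos)

lemma rho_nn: "0 \<le> rho_c \<delta> \<alpha> m"
  unfolding rho_c_def using delta_le Delta_lt1 alpha_pos m_pos
  by (intro divide_nonneg_pos) (auto intro: add_pos_pos mult_pos_pos)

lemma lam_le_Lam: "lam \<le> Lam"
proof -
  have "lam \<le> 1 / (2 * (1 - \<Delta>) + \<alpha> * m)"
  proof -
    have am: "\<alpha> * m \<le> \<alpha> * M" using mult_left_mono[OF mM less_imp_le[OF alpha_pos]] .
    have "2 * (1 - \<Delta>) + \<alpha> * m \<le> 2 * (1 - \<delta>) + \<alpha> * M" using am delta_le by (simp add: algebra_simps)
    then show ?thesis unfolding lam_def lambda_c_def using den_pos by (intro frac_le) auto
  qed
  also have "\<dots> \<le> Lam" unfolding Lam_def Lambda_c_def using rho_nn den_pos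
    by (intro divide_right_mono) auto
  finally show ?thesis .
qed

lemma Lam_pos: "0 < Lam" using lam_pos lam_le_Lam by linarith

lemma lamH: "lam * H < 1"
proof -
  have p: "0 < 2 * (1 - \<delta>) + \<alpha> * M" using lam_pos unfolding lam_def lambda_c_def by (simp add: zero_less_divide_1_iff)
  have "lam * H = (1 - \<delta> + \<alpha> * M) / (2 * (1 - \<delta>) + \<alpha> * M)" unfolding lam_def lambda_c_def H_def by simp
  also have "\<dots> < 1" using p delta_le Delta_lt1 by (simp add: divide_less_eq)
  finally show ?thesis .
qed

lemma H_pos: "0 < H" unfolding H_def using delta_le Delta_lt1 alpha_pos m_pos mM
  by (smt (verit) mult_pos_pos)

lemma cc_pos: "0 < cc"
proof -
  have "\<epsilon> * H * Lam \<le> 2 * (lam / Lam)^2 * H * Lam"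
    using eps_le H_pos Lam_pos unfolding lam_def Lam_def by (intro mult_right_mono) auto
  also have "\<dots> = 2 * lam * (lam * H) / Lam" using Lam_pos by (simp add: power2_eq_square field_simps)
  also have "\<dots> < 2 * lam * 1 / Lam"
    using lamH lam_pos Lam_pos by (intro divide_strict_right_mono mult_strict_left_mono) auto
  also have "\<dots> \<le> 2" using lam_le_Lam Lam_pos by (simp add: divide_le_eq)
  finally show ?thesis unfolding cc_def by simp
qed

lemma kap_pos: "0 < kap"
  unfolding kap_def using eps_pos cc_pos lam_pos alpha_pos m_pos by simp

lemma lower_bound: "Fobj W \<alpha> f x - (grad W \<alpha> f1 x \<bullet> grad W \<alpha> f1 x) / (2 * (\<alpha> * m)) \<le> Fobj W \<alpha> f y"
proof -
  have "- (grad W \<alpha> f1 x \<bullet> grad W \<alpha> f1 x) / (2 * (\<alpha> * m)) \<le> grad W \<alpha> f1 x \<bullet> (y - x) + (\<alpha> * m) / 2 * ((y - x) \<bullet> (y - x))"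
    using alpha_pos m_pos by (intro quad_min) simp
  moreover have "Fobj W \<alpha> f x + grad W \<alpha> f1 x \<bullet> (y - x) + (\<alpha> * m / 2) * ((y - x) \<bullet> (y - x)) \<le> Fobj W \<alpha> f y"
    using strong_conv[OF sym nn row alpha_pos f_deriv f1_deriv] f2_bounds by blast
  ultimately show ?thesis by simp
qed

lemma bdd: "bdd_below (range (Fobj W \<alpha> f))"
  using lower_bound[of 0] by (intro bdd_belowI) auto

lemma Fs_le: "Fs \<le> Fobj W \<alpha> f x"
  unfolding Fs_def using bdd by (rule cINF_lower) simp

lemma PL: "Fobj W \<alpha> f x - Fs \<le> (grad W \<alpha> f1 x \<bullet> grad W \<alpha> f1 x) / (2 * (\<alpha> * m))"
proof -
  have "Fobj W \<alpha> f x - (grad W \<alpha> f1 x \<bullet> grad W \<alpha> f1 x) / (2 * (\<alpha> * m)) \<le> Fs"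
    unfolding Fs_def by (rule cINF_greatest) (auto intro: lower_bound)
  then show ?thesis by simp
qed


lemmas ctxA = alpha_pos sym nn row delta_pos delta_le Delta_lt1 W_diag m_pos f2_bounds

definition "gg x = grad W \<alpha> f1 x"
definition "dd x = Hhat_inv W \<alpha> f2 x *v gg x"

lemma stp_eq: "stp x i = x + (- (\<epsilon> * dd x $ i)) *\<^sub>R axis i 1"
  unfolding stp_def Phi_mv dd_def gg_def by (simp add: algebra_simps)

lemma step_bound: "Fobj W \<alpha> f (stp x i) \<le> Fobj W \<alpha> f x - \<epsilon> * (dd x $ i) * (gg x $ i) + \<epsilon>^2 * H / 2 * (dd x $ i)^2"
proof -
  define \<tau> where "\<tau> = - (\<epsilon> * dd x $ i)"
  have F: "Fobj W \<alpha> f (stp x i) = Fobj W \<alpha> f x + \<tau> * ((mat 1 - W) *v x) $ i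
     + \<tau>^2 / 2 * (1 - W$i$i) + \<alpha> * (f i (x$i + \<tau>) - f i (x$i))"
    unfolding stp_eq \<tau>_def[symmetric] by (rule coord_update[OF sym])
  obtain t where t: "f i (x$i + \<tau>) = f i (x$i) + f1 i (x$i) * (x$i + \<tau> - x$i) + f2 i t / 2 * (x$i + \<tau> - x$i)^2"
    using taylor2[of "f i" "f1 i" "f2 i" "x$i + \<tau>" "x$i"] f_deriv f1_deriv by blast
  have ft: "\<alpha> * (f i (x$i + \<tau>) - f i (x$i)) \<le> \<alpha> * f1 i (x$i) * \<tau> + \<alpha> * M / 2 * \<tau>^2"
  proof -
    have "f2 i t / 2 * \<tau>^2 \<le> M / 2 * \<tau>^2" using f2_bounds by (intro mult_right_mono divide_right_mono) auto
    then have "f i (x$i + \<tau>) - f i (x$i) \<le> f1 i (x$i) * \<tau> + M / 2 * \<tau>^2" using t by simp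
    from mult_left_mono[OF this less_imp_le[OF alpha_pos]] show ?thesis by (simp add: algebra_simps)
  qed
  have w: "\<tau>^2 / 2 * (1 - W$i$i) \<le> \<tau>^2 / 2 * (1 - \<delta>)" using W_diag by (intro mult_left_mono) auto
  have g: "gg x $ i = ((mat 1 - W) *v x) $ i + \<alpha> * f1 i (x$i)" by (simp add: gg_def grad_def)
  have "Fobj W \<alpha> f (stp x i) \<le> Fobj W \<alpha> f x + \<tau> * gg x $ i + \<tau>^2 / 2 * H"
  proof -
    have "Fobj W \<alpha> f (stp x i) \<le> Fobj W \<alpha> f x + \<tau> * ((mat 1 - W) *v x) $ i + \<tau>^2 / 2 * (1 - \<delta>)
        + (\<alpha> * f1 i (x$i) * \<tau> + \<alpha> * M / 2 * \<tau>^2)"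
      unfolding F using ft w by linarith
    also have "\<dots> = Fobj W \<alpha> f x + \<tau> * gg x $ i + \<tau>^2 / 2 * H"
      unfolding g H_def by (simp add: field_simps)
    finally show ?thesis .
  qed
  then show ?thesis by (simp add: \<tau>_def power2_eq_square algebra_simps)
qed

lemma sum_step: "(\<Sum>i\<in>UNIV. Fobj W \<alpha> f (stp x i)) \<le> real CARD('n) * Fobj W \<alpha> f x - \<epsilon> * cc * (gg x \<bullet> dd x)"
proof -
  have "(\<Sum>i\<in>UNIV. Fobj W \<alpha> f (stp x i)) \<le> (\<Sum>i\<in>UNIV. Fobj W \<alpha> f x - \<epsilon> * (dd x $ i) * (gg x $ i) + \<epsilon>^2 * H / 2 * (dd x $ i)^2)"
    by (rule sum_mono) (rule step_bound)
  also have "\<dots> = real CARD('n) * Fobj W \<alpha> f x - \<epsilon> * (gg x \<bullet> dd x) + \<epsilon>^2 * H / 2 * (dd x \<bullet> dd x)"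
    by (simp add: sum.distrib sum_subtractf inner_vec_def sum_distrib_left power2_eq_square algebra_simps)
  also have "\<dots> \<le> real CARD('n) * Fobj W \<alpha> f x - \<epsilon> * (gg x \<bullet> dd x) + \<epsilon>^2 * H / 2 * (Lam * (gg x \<bullet> dd x))"
  proof -
    have "dd x \<bullet> dd x \<le> Lam * (gg x \<bullet> dd x)"
      unfolding dd_def Lam_def
      using cs_A[of "Hhat_inv W \<alpha> f2 x" "Lambda_c \<delta> \<Delta> \<alpha> m" "gg x"] A_psd[OF ctxA] A_upper[OF ctxA] A_sym[OF ctxA] Lam_pos
      unfolding Lam_def by blast
    moreover have "0 \<le> \<epsilon>^2 * H / 2" using H_pos by simp
    ultimately show ?thesis by (intro add_left_mono mult_left_mono) auto
  qed
  also have "\<dots> = real CARD('n) * Fobj W \<alpha> f x - \<epsilon> * cc * (gg x \<bullet> dd x)"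
    by (simp add: cc_def power2_eq_square algebra_simps)
  finally show ?thesis .
qed

lemma sum_V: "(\<Sum>i\<in>UNIV. Fobj W \<alpha> f (stp x i) - Fs) \<le> (real CARD('n) - kap) * (Fobj W \<alpha> f x - Fs)"
proof -
  have gd: "lam * (gg x \<bullet> gg x) \<le> gg x \<bullet> dd x"
    unfolding dd_def lam_def by (rule A_lower[OF ctxA])
  have pl: "Fobj W \<alpha> f x - Fs \<le> (gg x \<bullet> gg x) / (2 * (\<alpha> * m))"
    unfolding gg_def by (rule PL)
  have "kap * (Fobj W \<alpha> f x - Fs) \<le> kap * ((gg x \<bullet> gg x) / (2 * (\<alpha> * m)))"
    using kap_pos pl by (intro mult_left_mono) auto
  also have "\<dots> = \<epsilon> * cc * (lam * (gg x \<bullet> gg x))"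
    unfolding kap_def using alpha_pos m_pos by (simp add: field_simps)
  also have "\<dots> \<le> \<epsilon> * cc * (gg x \<bullet> dd x)"
    using gd eps_pos cc_pos by (intro mult_left_mono) auto
  finally have k: "kap * (Fobj W \<alpha> f x - Fs) \<le> \<epsilon> * cc * (gg x \<bullet> dd x)" .
  have "(\<Sum>i\<in>UNIV. Fobj W \<alpha> f (stp x i) - Fs) = (\<Sum>i\<in>UNIV. Fobj W \<alpha> f (stp x i)) - real CARD('n) * Fs"
    by (simp add: sum_subtractf)
  also have "\<dots> \<le> real CARD('n) * Fobj W \<alpha> f x - \<epsilon> * cc * (gg x \<bullet> dd x) - real CARD('n) * Fs"
    using sum_step by simp
  also have "\<dots> \<le> (real CARD('n) - kap) * (Fobj W \<alpha> f x - Fs)"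
    using k by (simp add: algebra_simps)
  finally show ?thesis .
qed


lemma ann_iter_cong: "(\<forall>s<t. p s = q s) \<Longrightarrow> ann_iter W \<alpha> f1 f2 \<epsilon> x0 p t = ann_iter W \<alpha> f1 f2 \<epsilon> x0 q t"
  by (induction t) auto

lemma ann_iter_Suc: "ann_iter W \<alpha> f1 f2 \<epsilon> x0 p (Suc t) = stp (ann_iter W \<alpha> f1 f2 \<epsilon> x0 p t) (p t)"
  by (simp add: stp_def)

definition "Vf x = Fobj W \<alpha> f x - Fs"
definition "Paths (t::nat) = PiE {..<t} (\<lambda>_. (UNIV :: 'n set))"
definition "SS x0 t = (\<Sum>p\<in>Paths t. Vf (ann_iter W \<alpha> f1 f2 \<epsilon> x0 p t))"

lemma Vf_nn: "0 \<le> Vf x" unfolding Vf_def using Fs_le by simp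

lemma finite_Paths: "finite (Paths t)" unfolding Paths_def by (intro finite_PiE) auto

lemma SS_nn: "0 \<le> SS x0 t" unfolding SS_def by (intro sum_nonneg Vf_nn)

lemma Paths_Suc_sum: "(\<Sum>p\<in>Paths (Suc t). h p) = (\<Sum>g\<in>Paths t. \<Sum>y\<in>UNIV. h (g(t := y)))"
proof -
  have eq: "Paths (Suc t) = (\<lambda>(y, g). g(t := y)) ` (UNIV \<times> Paths t)"
    unfolding Paths_def lessThan_Suc by (rule PiE_insert_eq)
  have inj: "inj_on (\<lambda>(y, g). g(t := y)) (UNIV \<times> Paths t)"
  proof (rule inj_onI, clarsimp)
    fix y g y' g'
    assume g: "g \<in> Paths t" and g': "g' \<in> Paths t" and e: "g(t := y) = g'(t := y')"
    have "y = y'" using fun_cong[OF e, of t] by simp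
    moreover have "g = g'"
    proof
      fix s show "g s = g' s"
      proof (cases "s < t")
        case True then show ?thesis using fun_cong[OF e, of s] by simp
      next
        case False then show ?thesis using g g' unfolding Paths_def by (auto simp: PiE_def extensional_def)
      qed
    qed
    ultimately show "y = y' \<and> g = g'" by simp
  qed
  have "(\<Sum>p\<in>Paths (Suc t). h p) = (\<Sum>(y, g)\<in>UNIV \<times> Paths t. h (g(t := y)))"
    unfolding eq by (subst sum.reindex[OF inj]) (simp add: case_prod_beta)
  also have "\<dots> = (\<Sum>y\<in>UNIV. \<Sum>g\<in>Paths t. h (g(t := y)))"
    by (rule sum.cartesian_product[symmetric])
  also have "\<dots> = (\<Sum>g\<in>Paths t. \<Sum>y\<in>UNIV. h (g(t := y)))"
    by (rule sum.swap)
  finally show ?thesis .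
qed

lemma SS_Suc: "SS x0 (Suc t) \<le> (real CARD('n) - kap) * SS x0 t"
proof -
  have "SS x0 (Suc t) = (\<Sum>g\<in>Paths t. \<Sum>y\<in>UNIV. Vf (stp (ann_iter W \<alpha> f1 f2 \<epsilon> x0 g t) y))"
    unfolding SS_def Paths_Suc_sum ann_iter_Suc
    by (intro sum.cong refl arg_cong[where f=Vf] arg_cong2[where f=stp] ann_iter_cong) auto
  also have "\<dots> \<le> (\<Sum>g\<in>Paths t. (real CARD('n) - kap) * Vf (ann_iter W \<alpha> f1 f2 \<epsilon> x0 g t))"
    by (intro sum_mono) (unfold Vf_def, rule sum_V)
  also have "\<dots> = (real CARD('n) - kap) * SS x0 t" unfolding SS_def by (simp add: sum_distrib_left)
  finally show ?thesis .
qed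

definition "rr = max 0 (1 - kap / real CARD('n))"

lemma rr_lt1: "rr < 1" unfolding rr_def using kap_pos by simp
lemma rr_nn: "0 \<le> rr" unfolding rr_def by simp

lemma SS_bound: "SS x0 t \<le> (real CARD('n) * rr) ^ t * Vf x0"
proof (induction t)
  case 0
  have "Paths 0 = {\<lambda>_. undefined}" unfolding Paths_def by (simp add: PiE_empty_domain)
  then show ?case by (simp add: SS_def)
next
  case (Suc t)
  have N: "0 < real CARD('n)" by simp
  have "real CARD('n) - kap \<le> real CARD('n) * rr"
    unfolding rr_def using N by (simp add: right_diff_distrib max_def)
  then have "(real CARD('n) - kap) * SS x0 t \<le> real CARD('n) * rr * SS x0 t"
    using SS_nn by (intro mult_right_mono) auto
  also have "\<dots> \<le> real CARD('n) * rr * ((real CARD('n) * rr) ^ t * Vf x0)"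
    using Suc.IH rr_nn by (intro mult_left_mono) auto
  finally show ?case using SS_Suc[of x0 t] by (simp add: mult.assoc)
qed


lemma main_prob:
  fixes P :: "'a measure" and J :: "nat \<Rightarrow> 'a \<Rightarrow> 'n"
  assumes prob: "prob_space P"
    and J_indep: "prob_space.indep_vars P (\<lambda>_. count_space UNIV) J UNIV"
    and J_unif: "\<forall>t i. measure P {\<omega> \<in> space P. J t \<omega> = i} = 1 / real CARD('n)"
  shows "AE \<omega> in P. (\<lambda>t. Fobj W \<alpha> f (ann_iter W \<alpha> f1 f2 \<epsilon> x0 (\<lambda>s. J s \<omega>) t))
                      \<longlonglongrightarrow> (INF z. Fobj W \<alpha> f z)"
proof -
  interpret prob_space P by (rule prob)
  have meas: "J s \<in> measurable P (count_space UNIV)" for s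
    using J_indep unfolding indep_vars_def2 by auto
  have indep: "indep_sets (\<lambda>i. {J i -` A \<inter> space P | A. A \<in> sets (count_space UNIV)}) UNIV"
    using J_indep unfolding indep_vars_def2 by auto
  define N where "N = real CARD('n)"
  have Npos: "0 < N" unfolding N_def by simp
  define K where "K p t = ann_iter W \<alpha> f1 f2 \<epsilon> x0 p t" for p t
  define E where "E p t = {\<omega> \<in> space P. \<forall>s<t. J s \<omega> = p s}" for p :: "nat \<Rightarrow> 'n" and t :: nat
  have Ealt: "E p t = space P \<inter> (\<Inter>s\<in>{..<t}. J s -` {p s} \<inter> space P)" for p t
    unfolding E_def by auto
  have E_sets: "E p t \<in> sets P" for p t
  proof -
    have "(\<Inter>s\<in>{..<t}. J s -` {p s} \<inter> space P) \<in> sets P" if "t > 0"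
      using that by (intro sets.finite_INT) (auto intro: measurable_sets[OF meas])
    then show ?thesis unfolding Ealt by (cases "t = 0") auto
  qed
  have E_prob: "prob (E p t) = (1 / N) ^ t" for p t
  proof (cases "t = 0")
    case True
    then have "E p t = space P" unfolding E_def by auto
    then show ?thesis using True by (simp add: prob_space)
  next
    case False
    have "E p t = (\<Inter>s\<in>{..<t}. J s -` {p s} \<inter> space P)" unfolding E_def using False by auto
    moreover have "prob (\<Inter>s\<in>{..<t}. J s -` {p s} \<inter> space P) = (\<Prod>s\<in>{..<t}. prob (J s -` {p s} \<inter> space P))"
      by (rule indep_setsD[OF indep]) (use False in auto)
    ultimately have "prob (E p t) = (\<Prod>s\<in>{..<t}. prob (J s -` {p s} \<inter> space P))" by simp
    also have "\<dots> = (\<Prod>s\<in>{..<t}. 1 / N)"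
    proof (rule prod.cong[OF refl])
      fix s
      have "J s -` {p s} \<inter> space P = {\<omega> \<in> space P. J s \<omega> = p s}" by auto
      then show "prob (J s -` {p s} \<inter> space P) = 1 / N" using J_unif unfolding N_def by simp
    qed
    finally show ?thesis by simp
  qed
  define bad where "bad \<eta> t = {p \<in> Paths t. \<eta> < Vf (K p t)}" for \<eta> t
  define A where "A \<eta> t = (\<Union>p\<in>bad \<eta> t. E p t)" for \<eta> t
  have fin_bad: "finite (bad \<eta> t)" for \<eta> t unfolding bad_def using finite_Paths by simp
  have A_sets: "A \<eta> t \<in> sets P" for \<eta> t
    unfolding A_def using fin_bad E_sets by (intro sets.finite_UN) auto
  have A_prob: "prob (A \<eta> t) \<le> rr ^ t * (Vf x0 / \<eta>)" if "\<eta> > 0" for \<eta> t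
  proof -
    have "prob (A \<eta> t) \<le> (\<Sum>p\<in>bad \<eta> t. prob (E p t))"
      unfolding A_def using fin_bad E_sets by (intro measure_subadditive_finite) auto
    also have "\<dots> = real (card (bad \<eta> t)) * (1 / N) ^ t" by (simp add: E_prob)
    also have "\<dots> \<le> SS x0 t / \<eta> * (1 / N) ^ t"
    proof (rule mult_right_mono)
      have "real (card (bad \<eta> t)) = (\<Sum>p\<in>bad \<eta> t. 1)" by simp
      also have "\<dots> \<le> (\<Sum>p\<in>bad \<eta> t. Vf (K p t) / \<eta>)"
        using that by (intro sum_mono) (auto simp: bad_def)
      also have "\<dots> \<le> (\<Sum>p\<in>Paths t. Vf (K p t) / \<eta>)"
        using finite_Paths that Vf_nn by (intro sum_mono2) (auto simp: bad_def)
      also have "\<dots> = SS x0 t / \<eta>" unfolding SS_def K_def by (simp add: sum_divide_distrib)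
      finally show "real (card (bad \<eta> t)) \<le> SS x0 t / \<eta>" .
    qed (use Npos in simp)
    also have "\<dots> \<le> (N * rr) ^ t * Vf x0 / \<eta> * (1 / N) ^ t"
      using SS_bound[of x0 t] that unfolding N_def by (intro mult_right_mono divide_right_mono) auto
    also have "\<dots> = rr ^ t * (Vf x0 / \<eta>)"
      using Npos by (simp add: power_mult_distrib power_divide field_simps)
    finally show ?thesis .
  qed
  have AE_k: "AE \<omega> in P. eventually (\<lambda>t. \<omega> \<in> space P - A (1 / real (Suc k)) t) sequentially" for k
  proof (rule borel_cantelli_AE1)
    show "\<And>t. A (1 / real (Suc k)) t \<in> sets P" by (rule A_sets)
    show "\<And>t. emeasure P (A (1 / real (Suc k)) t) < \<infinity>" by (simp add: less_top[symmetric])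
    show "summable (\<lambda>t. measure P (A (1 / real (Suc k)) t))"
    proof (rule summable_comparison_test)
      show "\<exists>N. \<forall>t\<ge>N. norm (measure P (A (1 / real (Suc k)) t)) \<le> rr ^ t * (Vf x0 / (1 / real (Suc k)))"
        using A_prob[of "1 / real (Suc k)"] by (intro exI[of _ 0]) auto
      show "summable (\<lambda>t. rr ^ t * (Vf x0 / (1 / real (Suc k))))"
        using rr_nn rr_lt1 by (intro summable_mult2 summable_geometric) auto
    qed
  qed
  have "AE \<omega> in P. \<forall>k. eventually (\<lambda>t. \<omega> \<in> space P - A (1 / real (Suc k)) t) sequentially"
    using AE_k by (simp add: AE_all_countable)
  then show ?thesis
  proof (rule AE_mp[OF _ AE_I2], intro impI)
    fix \<omega> assume \<omega>: "\<omega> \<in> space P"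
      and ev: "\<forall>k. eventually (\<lambda>t. \<omega> \<in> space P - A (1 / real (Suc k)) t) sequentially"
    define X where "X t = K (\<lambda>s. J s \<omega>) t" for t
    have small: "Vf (X t) \<le> \<eta>" if "\<omega> \<notin> A \<eta> t" for \<eta> t
    proof (rule ccontr)
      assume "\<not> Vf (X t) \<le> \<eta>"
      define p where "p = restrict (\<lambda>s. J s \<omega>) {..<t}"
      have pP: "p \<in> Paths t" unfolding p_def Paths_def by auto
      have "K p t = X t" unfolding X_def K_def p_def by (rule ann_iter_cong) auto
      then have "p \<in> bad \<eta> t" using pP \<open>\<not> Vf (X t) \<le> \<eta>\<close> unfolding bad_def by auto
      moreover have "\<omega> \<in> E p t" unfolding E_def p_def using \<omega> by auto
      ultimately have "\<omega> \<in> A \<eta> t" unfolding A_def by auto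
      then show False using that by simp
    qed
    have lim: "(\<lambda>t. Vf (X t)) \<longlonglongrightarrow> 0"
    proof (rule LIMSEQ_I)
      fix e :: real assume "0 < e"
      then obtain k :: nat where k: "1 / real (Suc k) < e" by (rule nat_approx_posE) simp
      have "eventually (\<lambda>t. norm (Vf (X t) - 0) < e) sequentially"
        using ev[rule_format, of k]
        by (rule eventually_mono) (use small Vf_nn k in \<open>fastforce\<close>)
      then show "\<exists>no. \<forall>t\<ge>no. norm (Vf (X t) - 0) < e" by (simp add: eventually_sequentially)
    qed
    have "(\<lambda>t. Fs + Vf (X t)) \<longlonglongrightarrow> Fs + 0" using lim by (rule tendsto_add[OF tendsto_const])
    then show "(\<lambda>t. Fobj W \<alpha> f (ann_iter W \<alpha> f1 f2 \<epsilon> x0 (\<lambda>s. J s \<omega>) t)) \<longlonglongrightarrow> (INF z. Fobj W \<alpha> f z)"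
      by (simp add: Vf_def X_def K_def Fs_def)
  qed
qed

end


theorem theorem4p4:
  fixes W :: "real^'n^'n"
    and \<alpha> \<delta> \<Delta> m M L \<epsilon> :: real
    and f f1 f2 :: "'n \<Rightarrow> real \<Rightarrow> real"
    and x0 :: "real^'n"
    and P :: "'a measure"
    and J :: "nat \<Rightarrow> 'a \<Rightarrow> 'n"
  assumes alpha_pos: "\<alpha> > 0"
    and W_sym: "transpose W = W"
    and W_nonneg: "\<forall>i j. 0 \<le> W $ i $ j"
    and W_lt1: "\<forall>i j. W $ i $ j < 1"
    and W_stoch: "W *v onevec = onevec"
    and W_null: "{v. (mat 1 - W) *v v = 0} = span {onevec}"
    and delta_pos: "0 < \<delta>" and delta_le: "\<delta> \<le> \<Delta>" and Delta_lt1: "\<Delta> < 1"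
    and W_diag: "\<forall>i. \<delta> \<le> W $ i $ i \<and> W $ i $ i \<le> \<Delta>"
    and f_deriv: "\<forall>i s. (f i has_real_derivative f1 i s) (at s)"
    and f1_deriv: "\<forall>i s. (f1 i has_real_derivative f2 i s) (at s)"
    and f2_cont: "\<forall>i. continuous_on UNIV (f2 i)"
    and m_pos: "0 < m"
    and f2_bounds: "\<forall>i s. m \<le> f2 i s \<and> f2 i s \<le> M"
    and f2_lip: "\<forall>i a b. \<bar>f2 i a - f2 i b\<bar> \<le> L * \<bar>a - b\<bar>"
    and eps_pos: "0 < \<epsilon>"
    and eps_le: "\<epsilon> \<le> 2 * (lambda_c \<delta> \<alpha> M / Lambda_c \<delta> \<Delta> \<alpha> m)\<^sup>2"
    and prob: "prob_space P"
    and J_indep: "prob_space.indep_vars P (\<lambda>_. count_space UNIV) J UNIV"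
    and J_unif: "\<forall>t i. measure P {\<omega> \<in> space P. J t \<omega> = i} = 1 / real CARD('n)"
  shows "AE \<omega> in P. (\<lambda>t. Fobj W \<alpha> f (ann_iter W \<alpha> f1 f2 \<epsilon> x0 (\<lambda>s. J s \<omega>) t))
                      \<longlonglongrightarrow> (INF z. Fobj W \<alpha> f z)"
  proof -
  have sym: "\<forall>i j. W$i$j = W$j$i"
  proof (intro allI)
    fix i j
    have "(transpose W) $ i $ j = W $ j $ i" by (simp add: transpose_def)
    then show "W$i$j = W$j$i" using W_sym by simp
  qed
  have row: "\<forall>i. (\<Sum>j\<in>UNIV. W$i$j) = 1"
  proof
    fix i
    have "(W *v onevec) $ i = (\<Sum>j\<in>UNIV. W$i$j)" by (simp add: matrix_vector_mult_def onevec_def)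
    then show "(\<Sum>j\<in>UNIV. W$i$j) = 1" using W_stoch by (simp add: onevec_def)
  qed
  interpret annctx W \<alpha> \<delta> \<Delta> m M \<epsilon> f f1 f2
    by (unfold_locales) (use alpha_pos sym W_nonneg row delta_pos delta_le Delta_lt1 W_diag f_deriv f1_deriv m_pos f2_bounds eps_pos eps_le in auto)
  show ?thesis by (rule main_prob[OF prob J_indep J_unif])
qed

end
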